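(* Let $n$ be a non-negative integer. Every closed subgroup of $\mathbb{R}^n$ is reversible as a topological space.
   Context: A topological space $X$ is reversible if every continuous bijection of $X$ onto itself is open (i.e. a homeomorphism). $\mathbb{R}^n$ carries the Euclidean topology. *)

theory Defs
  imports "HOL-Analysis.Analysis"
begin

definition reversible :: "'a topology \<Rightarrow> bool" where
  "reversible X \<longleftrightarrow>
     (\<forall>f. continuous_map X X f \<and> bij_betw f (topspace X) (topspace X) \<longrightarrow> open_map X X f)"

definition additive_subgroup :: "'a::ab_group_add set \<Rightarrow> bool" where
  "additive_subgroup G \<longleftrightarrow> 0 \<in> G \<and> (\<forall>x\<in>G. \<forall>y\<in>G. x + y \<in> G) \<and> (\<forall>x\<in>G. - x \<in> G)"

end

theory Submission
  imports Defs
begin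

lemma subgroup_nat_mult:
  fixes x :: "'a::real_vector"
  assumes G: "additive_subgroup G" and x: "x \<in> G"
  shows "real n *\<^sub>R x \<in> G"
proof (induction n)
  case 0
  have "0 \<in> G" using G unfolding additive_subgroup_def by blast
  then show ?case by simp
next
  case (Suc n)
  have "x + real n *\<^sub>R x \<in> G" using G x Suc unfolding additive_subgroup_def by blast
  moreover have "real (Suc n) *\<^sub>R x = x + real n *\<^sub>R x" by (simp add: algebra_simps)
  ultimately show ?case by simp
qed

lemma subgroup_int_mult:
  fixes x :: "'a::real_vector"
  assumes G: "additive_subgroup G" and x: "x \<in> G"
  shows "real_of_int k *\<^sub>R x \<in> G"
proof (cases "k \<ge> 0")
  case True
  then have h: "real (nat k) = real_of_int k" by simp
  show ?thesis using subgroup_nat_mult[OF G x, of "nat k"] unfolding h .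
next
  case False
  then have h: "real (nat (-k)) = - real_of_int k" by simp
  have e: "real_of_int k *\<^sub>R x = - (real (nat (-k)) *\<^sub>R x)" unfolding h by simp
  have "- (real (nat (-k)) *\<^sub>R x) \<in> G"
    using subgroup_nat_mult[OF G x, of "nat (-k)"] G unfolding additive_subgroup_def by blast
  then show ?thesis using e by simp
qed

lemma subgroup_V_subspace:
  fixes G :: "'a::real_vector set"
  assumes G: "additive_subgroup G"
  shows "subspace {v. \<forall>t. t *\<^sub>R v \<in> G}"
  unfolding subspace_def
proof (intro conjI allI ballI)
  have "0 \<in> G" using G unfolding additive_subgroup_def by blast
  then show "0 \<in> {v. \<forall>t. t *\<^sub>R v \<in> G}" by simp
next
  fix x y assume "x \<in> {v. \<forall>t. t *\<^sub>R v \<in> G}" "y \<in> {v. \<forall>t. t *\<^sub>R v \<in> G}"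
  then have "t *\<^sub>R x \<in> G" "t *\<^sub>R y \<in> G" for t by auto
  then have "t *\<^sub>R x + t *\<^sub>R y \<in> G" for t using G unfolding additive_subgroup_def by blast
  then show "x + y \<in> {v. \<forall>t. t *\<^sub>R v \<in> G}" by (simp add: scaleR_add_right)
next
  fix c :: real and x assume "x \<in> {v. \<forall>t. t *\<^sub>R v \<in> G}"
  then have "(t * c) *\<^sub>R x \<in> G" for t by blast
  then show "c *\<^sub>R x \<in> {v. \<forall>t. t *\<^sub>R v \<in> G}" by simp
qed

lemma closed_subgroup_local:
  fixes G :: "'a::euclidean_space set"
  assumes G: "additive_subgroup G" and cl: "closed G"
  shows "\<exists>r>0. \<forall>g\<in>G. norm g < r \<longrightarrow> g \<in> {v. \<forall>t. t *\<^sub>R v \<in> G}"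
proof (rule ccontr)
  define V where "V = {v. \<forall>t. t *\<^sub>R v \<in> G}"
  have sV: "subspace V" unfolding V_def by (rule subgroup_V_subspace[OF G])
  have VG: "V \<subseteq> G"
  proof
    fix v assume "v \<in> V"
    then have "1 *\<^sub>R v \<in> G" unfolding V_def by blast
    then show "v \<in> G" by simp
  qed
  assume neg: "\<not> ?thesis"
  have "\<forall>n::nat. \<exists>g. g \<in> G \<and> norm g < inverse (real n + 1) \<and> g \<notin> V"
  proof
    fix n :: nat
    have "inverse (real n + 1) > 0" by simp
    with neg show "\<exists>g. g \<in> G \<and> norm g < inverse (real n + 1) \<and> g \<notin> V"
      unfolding V_def by blast
  qed
  from choice[OF this] obtain g where g0: "\<forall>n. g n \<in> G \<and> norm (g n) < inverse (real n + 1) \<and> g n \<notin> V"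
    by blast
  then have g: "\<And>n. g n \<in> G" "\<And>n. norm (g n) < inverse (real n + 1)" "\<And>n. g n \<notin> V"
    by auto
  have "\<exists>w. w \<in> G \<and> w \<noteq> 0 \<and> norm w \<le> norm (g n) \<and> (\<forall>v\<in>V. orthogonal w v)" for n
  proof -
    obtain y z where yz: "y \<in> span V" "\<And>w. w \<in> span V \<Longrightarrow> orthogonal z w" "g n = y + z"
      using orthogonal_subspace_decomp_exists[of V "g n"] by blast
    have spanV: "span V = V" using sV by (simp add: span_eq_iff)
    have yV: "y \<in> V" using yz(1) spanV by simp
    have "- y \<in> G" using G VG yV unfolding additive_subgroup_def by blast
    then have "g n + - y \<in> G" using G g(1)[of n] unfolding additive_subgroup_def by blast
    moreover have "g n + - y = z" using yz(3) by simp
    ultimately have zG: "z \<in> G" by simp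
    have "z \<noteq> 0" using yz(3) yV g(3)[of n] by auto
    moreover have "norm (g n) ^ 2 = norm y ^ 2 + norm z ^ 2"
    proof -
      have "orthogonal y z" using yz(2)[OF yz(1)] by (simp add: orthogonal_commute)
      then show ?thesis using yz(3) norm_add_Pythagorean by metis
    qed
    then have "norm z ^ 2 \<le> norm (g n) ^ 2" by simp
    then have "norm z \<le> norm (g n)" by (rule power2_le_imp_le) simp
    ultimately show ?thesis using zG yz(2) spanV by auto
  qed
  then have "\<forall>n. \<exists>w. w \<in> G \<and> w \<noteq> 0 \<and> norm w \<le> norm (g n) \<and> (\<forall>v\<in>V. orthogonal w v)" by blast
  from choice[OF this] obtain w where w0: "\<forall>n. w n \<in> G \<and> w n \<noteq> 0 \<and> norm (w n) \<le> norm (g n) \<and> (\<forall>v\<in>V. orthogonal (w n) v)"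
    by blast
  then have w: "\<And>n. w n \<in> G" "\<And>n. w n \<noteq> 0" "\<And>n. norm (w n) \<le> norm (g n)"
    "\<And>n v. v \<in> V \<Longrightarrow> orthogonal (w n) v"
    by auto
  have w0: "w \<longlonglongrightarrow> 0"
  proof (rule tendsto_norm_zero_cancel, rule Lim_null_comparison[OF _ LIMSEQ_inverse_real_of_nat])
    show "\<forall>\<^sub>F n in sequentially. norm (norm (w n)) \<le> inverse (real (Suc n))"
    proof (rule always_eventually, rule allI)
      fix n
      have "norm (w n) \<le> norm (g n)" "norm (g n) < inverse (real n + 1)" using w(3) g(2) by auto
      then show "norm (norm (w n)) \<le> inverse (real (Suc n))" by (simp add: add.commute)
    qed
  qed
  define u where "u n = inverse (norm (w n)) *\<^sub>R w n" for n
  have u1: "u n \<in> sphere 0 1" for n using w(2) by (simp add: u_def)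
  have sc: "seq_compact (sphere (0::'a) 1)" by (rule compact_imp_seq_compact[OF compact_sphere])
  have u1': "\<forall>n. u n \<in> sphere 0 1" using u1 by blast
  obtain l r where l: "l \<in> sphere 0 1" "strict_mono r" "(u \<circ> r) \<longlonglongrightarrow> l"
    by (rule seq_compactE[OF sc u1'])
  have lV: "l \<in> V"
    unfolding V_def
  proof (intro CollectI allI)
    fix t :: real
    define k where "k j = \<lfloor>t / norm (w (r j))\<rfloor>" for j
    have kG: "real_of_int (k j) *\<^sub>R w (r j) \<in> G" for j by (rule subgroup_int_mult[OF G w(1)])
    have wr0: "(\<lambda>j. w (r j)) \<longlonglongrightarrow> 0"
      using LIMSEQ_subseq_LIMSEQ[OF w0 l(2)] by (simp add: o_def)
    have d0: "(\<lambda>j. real_of_int (k j) *\<^sub>R w (r j) - t *\<^sub>R u (r j)) \<longlonglongrightarrow> 0"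
    proof (rule tendsto_norm_zero_cancel, rule Lim_null_comparison[OF _ tendsto_norm_zero[OF wr0]])
      show "\<forall>\<^sub>F j in sequentially. norm (norm (real_of_int (k j) *\<^sub>R w (r j) - t *\<^sub>R u (r j))) \<le> norm (w (r j))"
      proof (rule always_eventually, rule allI)
        fix j
        let ?a = "norm (w (r j))"
        have a: "?a > 0" using w(2) by simp
        have "real_of_int (k j) *\<^sub>R w (r j) - t *\<^sub>R u (r j) = (real_of_int (k j) - t / ?a) *\<^sub>R w (r j)"
          by (simp add: u_def algebra_simps divide_inverse)
        then have "norm (real_of_int (k j) *\<^sub>R w (r j) - t *\<^sub>R u (r j)) = \<bar>real_of_int (k j) - t / ?a\<bar> * ?a"
          by simp
        also have "\<dots> \<le> 1 * ?a"
        proof (rule mult_right_mono)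
          have "real_of_int \<lfloor>t / ?a\<rfloor> \<le> t / ?a" by (rule of_int_floor_le)
          moreover have "t / ?a < real_of_int \<lfloor>t / ?a\<rfloor> + 1" by (rule real_of_int_floor_add_one_gt)
          ultimately show "\<bar>real_of_int (k j) - t / ?a\<bar> \<le> 1" unfolding k_def by linarith
        qed (use a in simp)
        finally show "norm (norm (real_of_int (k j) *\<^sub>R w (r j) - t *\<^sub>R u (r j))) \<le> ?a" by simp
      qed
    qed
    have "(\<lambda>j. t *\<^sub>R u (r j)) \<longlonglongrightarrow> t *\<^sub>R l"
      using l(3) by (intro tendsto_scaleR tendsto_const) (simp add: o_def)
    from tendsto_add[OF d0 this]
    have "(\<lambda>j. real_of_int (k j) *\<^sub>R w (r j)) \<longlonglongrightarrow> t *\<^sub>R l" by simp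
    then show "t *\<^sub>R l \<in> G"
      using closed_sequentially[OF cl, of "\<lambda>j. real_of_int (k j) *\<^sub>R w (r j)" "t *\<^sub>R l"] kG by blast
  qed
  have "(\<lambda>j. inner (u (r j)) l) \<longlonglongrightarrow> inner l l"
    using l(3) by (intro tendsto_inner tendsto_const) (simp add: o_def)
  moreover have "inner (u (r j)) l = 0" for j
    using w(4)[OF lV, of "r j"] by (simp add: u_def orthogonal_def)
  ultimately have "(\<lambda>j. inner (u (r j)) l) \<longlonglongrightarrow> 0" by simp
  with \<open>(\<lambda>j. inner (u (r j)) l) \<longlonglongrightarrow> inner l l\<close> have "inner l l = 0" by (rule LIMSEQ_unique)
  then show False using l(1) by simp
qed

lemma open_shift1:
  fixes c :: "'a::real_normed_vector"
  assumes "open Q" shows "open {v. c + v \<in> Q}"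
proof -
  have "{v. c + v \<in> Q} = (\<lambda>v. c + v) -` Q" by auto
  also have "open \<dots>" by (intro open_vimage assms continuous_intros)
  finally show ?thesis .
qed

lemma open_shift2:
  fixes c :: "'a::real_normed_vector"
  assumes "open Q" shows "open {v. v - c \<in> Q}"
proof -
  have "{v. v - c \<in> Q} = (\<lambda>v. v - c) -` Q" by auto
  also have "open \<dots>" by (intro open_vimage assms continuous_intros)
  finally show ?thesis .
qed

theorem proposition5p7:
  fixes G :: "(real ^ 'n) set"
  assumes "additive_subgroup G" and "closed G"
  shows "reversible (subtopology euclidean G)"
proof -
  define V where "V = {v. \<forall>t. t *\<^sub>R v \<in> G}"
  have sV: "subspace V" unfolding V_def by (rule subgroup_V_subspace[OF assms(1)])
  have VG: "V \<subseteq> G"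
  proof
    fix v assume "v \<in> V"
    then have "1 *\<^sub>R v \<in> G" unfolding V_def by blast
    then show "v \<in> G" by simp
  qed
  obtain r where r: "r > 0" "\<And>g. g \<in> G \<Longrightarrow> norm g < r \<Longrightarrow> g \<in> V"
    using closed_subgroup_local[OF assms] unfolding V_def by blast
  have addG: "x + y \<in> G" if "x \<in> G" "y \<in> G" for x y
    using assms(1) that unfolding additive_subgroup_def by blast
  have diffG: "x - y \<in> G" if "x \<in> G" "y \<in> G" for x y
  proof -
    have "x + - y \<in> G" using assms(1) that unfolding additive_subgroup_def by blast
    then show ?thesis by simp
  qed
  show ?thesis
    unfolding reversible_def
  proof (intro allI impI)
    fix f assume fa: "continuous_map (top_of_set G) (top_of_set G) f \<and> bij_betw f (topspace (top_of_set G)) (topspace (top_of_set G))"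
    then have contf: "continuous_on G f" and fG: "f ` G \<subseteq> G" and injf: "inj_on f G"
      by (auto simp: continuous_map_subtopology_eu bij_betw_def)
    show "open_map (top_of_set G) (top_of_set G) f"
      unfolding open_map_def
    proof (intro allI impI)
      fix U assume U: "openin (top_of_set G) U"
      then have UG: "U \<subseteq> G" by (simp add: openin_imp_subset)
      show "openin (top_of_set G) (f ` U)"
      proof (subst openin_subopen, intro ballI)
        fix y assume "y \<in> f ` U"
        then obtain x where x: "x \<in> U" "y = f x" by blast
        have xG: "x \<in> G" using x UG by blast
        define A where "A = U \<inter> (G \<inter> ball x r) \<inter> (G \<inter> f -` ball (f x) r)"
        have h1: "openin (top_of_set G) (G \<inter> f -` ball (f x) r)"
          using contf by (intro continuous_openin_preimage_gen open_ball) 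
        have h2: "openin (top_of_set G) (G \<inter> ball x r)" by (rule openin_open_Int) simp
        have Aop: "openin (top_of_set G) A"
          unfolding A_def by (rule openin_Int[OF openin_Int[OF U h2] h1])
        then obtain Q where Q: "open Q" "A = G \<inter> Q" by (auto simp: openin_open)
        define S where "S = V \<inter> {v. x + v \<in> Q}"
        have Sop: "openin (top_of_set V) S"
          unfolding S_def
          by (intro openin_open_Int open_shift1 Q(1))
        have xvG: "x + v \<in> G" if "v \<in> V" for v using addG[OF xG, of v] VG that by blast
        have SA: "x + v \<in> A" if "v \<in> S" for v using that xvG Q(2) unfolding S_def by blast
        define h where "h v = f (x + v) - f x" for v
        have fxG: "f x \<in> G" using fG xG by blast
        have hS: "h v \<in> V \<and> norm (h v) < r" if "v \<in> S" for v
        proof -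
          have "x + v \<in> A" by (rule SA[OF that])
          then have a: "x + v \<in> G" "f (x + v) \<in> ball (f x) r" unfolding A_def by auto
          have "f (x + v) \<in> G" using fG a(1) by blast
          then have "h v \<in> G" unfolding h_def by (rule diffG[OF _ fxG])
          moreover have "norm (h v) < r" using a(2) unfolding h_def by (simp add: dist_norm norm_minus_commute)
          ultimately show ?thesis using r(2) by blast
        qed
        have conth: "continuous_on S h"
        proof -
          have "(\<lambda>v. x + v) ` S \<subseteq> G" using SA unfolding A_def by blast
          then have "continuous_on ((\<lambda>v. x + v) ` S) f" by (rule continuous_on_subset[OF contf])
          then have "continuous_on S (f \<circ> (\<lambda>v. x + v))"
            by (intro continuous_on_compose continuous_intros)
          then show ?thesis unfolding h_def o_def by (intro continuous_intros)
        qed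
        have injh: "inj_on h S"
        proof (rule inj_onI)
          fix a b assume ab: "a \<in> S" "b \<in> S" "h a = h b"
          then have "f (x + a) = f (x + b)" unfolding h_def by simp
          moreover have "x + a \<in> G" "x + b \<in> G" using ab SA unfolding A_def by auto
          ultimately have "x + a = x + b" by (rule inj_onD[OF injf])
          then show "a = b" by simp
        qed
        have hop: "openin (top_of_set V) (h ` S)"
        proof -
          have "h \<in> S \<rightarrow> V" using hS by blast
          then show ?thesis by (rule invariance_of_domain_subspaces[OF Sop sV sV order_refl conth _ injh])
        qed
        then obtain Q' where Q': "open Q'" "h ` S = V \<inter> Q'" by (auto simp: openin_open)
        define T where "T = G \<inter> ({z. z - f x \<in> Q'} \<inter> ball (f x) r)"
        have "openin (top_of_set G) T"
          unfolding T_def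
          by (intro openin_open_Int open_Int open_shift2 open_ball Q'(1))
        moreover have "y \<in> T"
        proof -
          have "x \<in> A" unfolding A_def using x(1) xG r(1) by simp
          then have "x \<in> Q" using Q(2) by blast
          then have "0 \<in> S" unfolding S_def by (simp add: subspace_0[OF sV])
          then have "h 0 \<in> Q'" using Q' by blast
          then have "f x - f x \<in> Q'" by (simp add: h_def)
          then show ?thesis unfolding T_def using x(2) fxG r(1) by simp
        qed
        moreover have "T \<subseteq> f ` U"
        proof
          fix z assume z: "z \<in> T"
          then have zT: "z \<in> G" "z \<in> ball (f x) r" unfolding T_def by auto
          have "z - f x \<in> G" using diffG[OF zT(1) fxG] .
          moreover have "norm (z - f x) < r" using zT(2) by (simp add: dist_norm norm_minus_commute)
          ultimately have "z - f x \<in> V" using r(2) by blast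
          moreover have "z - f x \<in> Q'" using z unfolding T_def by blast
          ultimately have "z - f x \<in> h ` S" using Q'(2) by blast
          then obtain v where v: "v \<in> S" "z - f x = h v" by blast
          then have "z = f (x + v)" unfolding h_def by (simp add: algebra_simps)
          moreover have "x + v \<in> U" using SA[OF v(1)] unfolding A_def by blast
          ultimately show "z \<in> f ` U" by blast
        qed
        ultimately show "\<exists>T. openin (top_of_set G) T \<and> y \<in> T \<and> T \<subseteq> f ` U" by blast
      qed
    qed
  qed
qed

end
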